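(* Let $\mathbb{L}/\mathbb{K}$ be a finite Galois extension of degree $N$ with Galois group $G$, let $a\in\mathbb{L}[G]$, let $\mathcal{B}=(\beta_1,\dots,\beta_N)$ be a $\mathbb{K}$-basis of $\mathbb{L}$, and set $\mathbf{v}=(a(\beta_1),\dots,a(\beta_N))$. Then \[\mathrm{rk}_\mathbb{K}(a)=\dim_\mathbb{L}\big(\mathbb{L}[G]/\mathrm{Ann}_{\mathbb{L}[G]}(a)\big)=\mathrm{rk}_\mathbb{L}(M_G(\mathbf{v}))=\mathrm{rk}_\mathbb{L}(D_G(a)).\]
   Context: $\mathbb{L}[G]=\{\sum_ga_gg:a_g\in\mathbb{L}\}$ with composition product $(ag)\circ(bh)=(a\,g(b))(gh)$; $a$ acts on $\mathbb{L}$ by $x\mapsto\sum a_gg(x)$ and $\mathrm{rk}_\mathbb{K}(a)$ is the rank of this $\mathbb{K}$-linear map. $\mathrm{Ann}_{\mathbb{L}[G]}(a)=\{f\in\mathbb{L}[G]:f\circ a=0\}$. With $G=\{g_1,\dots,g_N\}$ ordered, $M_G(\mathbf{v})=(g_i(v_j))_{i,j}$ is the $G$-Moore matrix and $D_G(a)$ is the $G$-Dickson matrix with entries $D_G(a)_{g,h}=h(a_{h^{-1}g})$ (rows/columns indexed by $G$). *)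

theory Defs
  imports Main "HOL-Library.Function_Algebras" "Jordan_Normal_Form.DL_Rank"
begin

text \<open>The big field L is the type 'a; the subfield K is a subset of it.\<close>

definition subfield_of :: "'a::field set \<Rightarrow> bool" where
  "subfield_of K \<longleftrightarrow> 0 \<in> K \<and> 1 \<in> K \<and> (\<forall>x\<in>K. \<forall>y\<in>K. x + y \<in> K \<and> x * y \<in> K \<and> - x \<in> K)
     \<and> (\<forall>x\<in>K. x \<noteq> 0 \<longrightarrow> inverse x \<in> K)"

definition K_span :: "'a::field set \<Rightarrow> 'a set \<Rightarrow> 'a set" where
  "K_span K S = {x. \<exists>T c. finite T \<and> T \<subseteq> S \<and> (\<forall>t\<in>T. c t \<in> K) \<and> x = (\<Sum>t\<in>T. c t * t)}"

definition K_indep :: "'a::field set \<Rightarrow> 'a set \<Rightarrow> bool" where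
  "K_indep K S \<longleftrightarrow> (\<forall>T c. finite T \<and> T \<subseteq> S \<and> (\<forall>t\<in>T. c t \<in> K) \<and> (\<Sum>t\<in>T. c t * t) = 0
      \<longrightarrow> (\<forall>t\<in>T. c t = 0))"

definition K_is_basis :: "'a::field set \<Rightarrow> 'a set \<Rightarrow> 'a set \<Rightarrow> bool" where
  "K_is_basis K V B \<longleftrightarrow> finite B \<and> B \<subseteq> V \<and> K_indep K B \<and> K_span K B = V"

definition K_dim :: "'a::field set \<Rightarrow> 'a set \<Rightarrow> nat" where
  "K_dim K V = (if \<exists>B. K_is_basis K V B then card (SOME B. K_is_basis K V B) else 0)"

definition field_aut :: "('a::field \<Rightarrow> 'a) \<Rightarrow> bool" where
  "field_aut \<sigma> \<longleftrightarrow> bij \<sigma> \<and> (\<forall>x y. \<sigma> (x + y) = \<sigma> x + \<sigma> y) \<and> (\<forall>x y. \<sigma> (x * y) = \<sigma> x * \<sigma> y)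
      \<and> \<sigma> 1 = 1"

definition Gal :: "'a::field set \<Rightarrow> ('a \<Rightarrow> 'a) set" where
  "Gal K = {\<sigma>. field_aut \<sigma> \<and> (\<forall>x\<in>K. \<sigma> x = x)}"

definition finite_galois :: "'a::field set \<Rightarrow> bool" where
  "finite_galois K \<longleftrightarrow> subfield_of K \<and> (\<exists>B. K_is_basis K UNIV B)
     \<and> {x. \<forall>\<sigma>\<in>Gal K. \<sigma> x = x} = K"

text \<open>The skew group ring L[G]: finitely supported coefficient functions G \<rightarrow> L
  (zero outside G).\<close>
definition grp_ring :: "('a \<Rightarrow> 'a) set \<Rightarrow> (('a \<Rightarrow> 'a) \<Rightarrow> 'a::field) set" where
  "grp_ring G = {f. \<forall>g. g \<notin> G \<longrightarrow> f g = 0}"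

text \<open>Composition product: (f g) g \<circ> (a h) h = (f g * g (a h)) (g h).\<close>
definition comp_prod :: "('a \<Rightarrow> 'a) set \<Rightarrow> (('a \<Rightarrow> 'a) \<Rightarrow> 'a::field) \<Rightarrow> (('a \<Rightarrow> 'a) \<Rightarrow> 'a) \<Rightarrow> (('a \<Rightarrow> 'a) \<Rightarrow> 'a)" where
  "comp_prod G f a = (\<lambda>k. if k \<in> G then (\<Sum>g\<in>G. \<Sum>h\<in>G. if g \<circ> h = k then f g * g (a h) else 0) else 0)"

definition Ann :: "('a \<Rightarrow> 'a) set \<Rightarrow> (('a \<Rightarrow> 'a) \<Rightarrow> 'a::field) \<Rightarrow> (('a \<Rightarrow> 'a) \<Rightarrow> 'a) set" where
  "Ann G a = {f \<in> grp_ring G. comp_prod G f a = (\<lambda>_. 0)}"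

definition gr_act :: "('a \<Rightarrow> 'a) set \<Rightarrow> (('a \<Rightarrow> 'a) \<Rightarrow> 'a::field) \<Rightarrow> 'a \<Rightarrow> 'a" where
  "gr_act G a x = (\<Sum>g\<in>G. a g * g x)"

definition rk_K :: "'a::field set \<Rightarrow> ('a \<Rightarrow> 'a) set \<Rightarrow> (('a \<Rightarrow> 'a) \<Rightarrow> 'a) \<Rightarrow> nat" where
  "rk_K K G a = K_dim K (range (gr_act G a))"

definition gr_scale :: "'a::field \<Rightarrow> (('a \<Rightarrow> 'a) \<Rightarrow> 'a) \<Rightarrow> (('a \<Rightarrow> 'a) \<Rightarrow> 'a)" where
  "gr_scale c f = (\<lambda>g. c * f g)"

definition L_quot_dim :: "(('a \<Rightarrow> 'a) \<Rightarrow> 'a::field) set \<Rightarrow> (('a \<Rightarrow> 'a) \<Rightarrow> 'a) set \<Rightarrow> nat" where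
  "L_quot_dim V W = Vector_Spaces.vector_space.dim gr_scale V - Vector_Spaces.vector_space.dim gr_scale W"

definition moore_mat :: "('a \<Rightarrow> 'a) list \<Rightarrow> 'a list \<Rightarrow> 'a mat" where
  "moore_mat gs vs = mat (length gs) (length vs) (\<lambda>(i, j). (gs ! i) (vs ! j))"

definition dickson_mat :: "('a \<Rightarrow> 'a) list \<Rightarrow> (('a \<Rightarrow> 'a) \<Rightarrow> 'a) \<Rightarrow> 'a mat" where
  "dickson_mat gs a = mat (length gs) (length gs)
     (\<lambda>(i, j). (gs ! j) (a (Hilbert_Choice.inv (gs ! j) \<circ> gs ! i)))"

end

theory Submission
  imports Defs
begin



section \<open>Galois group facts\<close>

abbreviation hinv :: "('b \<Rightarrow> 'c) \<Rightarrow> 'c \<Rightarrow> 'b" where "hinv \<equiv> Hilbert_Choice.inv"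


lemma field_aut_0: "field_aut s \<Longrightarrow> s 0 = 0"
  unfolding field_aut_def by (metis add_cancel_right_right)

lemma field_aut_add: "field_aut s \<Longrightarrow> s (x + y) = s x + s y"
  unfolding field_aut_def by blast

lemma field_aut_mult: "field_aut s \<Longrightarrow> s (x * y) = s x * s y"
  unfolding field_aut_def by blast

lemma field_aut_1: "field_aut s \<Longrightarrow> s 1 = 1"
  unfolding field_aut_def by blast

lemma field_aut_bij: "field_aut s \<Longrightarrow> bij s"
  unfolding field_aut_def by blast

lemma field_aut_neg: "field_aut s \<Longrightarrow> s (- x) = - s x"
proof -
  assume a: "field_aut s"
  then have "s (x + - x) = s x + s (- x)" by (rule field_aut_add)
  then have "0 = s x + s (- x)" using field_aut_0[OF a] by simp
  have "s (- x) = - s x + (s x + s (- x))" by simp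
  also have "\<dots> = - s x" using \<open>0 = s x + s (- x)\<close> by simp
  finally show ?thesis .
qed

lemma field_aut_diff: "field_aut s \<Longrightarrow> s (x - y) = s x - s y"
  using field_aut_add[of s x "- y"] field_aut_neg[of s y] by simp

lemma field_aut_sum: "field_aut s \<Longrightarrow> s (sum f A) = (\<Sum>x\<in>A. s (f x))"
  by (induction A rule: infinite_finite_induct) (auto simp: field_aut_0 field_aut_add)

lemma field_aut_eq0: "field_aut s \<Longrightarrow> s x = 0 \<longleftrightarrow> x = 0"
  by (metis bij_is_inj field_aut_0 field_aut_bij injD)

lemma field_aut_inv: "field_aut s \<Longrightarrow> field_aut (hinv s)"
proof -
  assume s: "field_aut s"
  have b: "bij s" using s field_aut_bij by blast
  have ss: "\<And>x. s (hinv s x) = x" using b by (simp add: bij_is_surj surj_f_inv_f)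
  have iss: "\<And>x. hinv s (s x) = x" using b by (simp add: bij_is_inj)
  show ?thesis unfolding field_aut_def
  proof (intro conjI allI)
    show "bij (hinv s)" using b bij_imp_bij_inv by blast
    fix x y
    have "s (hinv s x + hinv s y) = x + y" using field_aut_add[OF s] ss by simp
    then show "hinv s (x + y) = hinv s x + hinv s y"
      using iss by (metis)
    have "s (hinv s x * hinv s y) = x * y" using field_aut_mult[OF s] ss by simp
    then show "hinv s (x * y) = hinv s x * hinv s y"
      using iss by (metis)
  next
    have "s 1 = 1" using field_aut_1[OF s] .
    then show "hinv s 1 = 1" using iss by metis
  qed
qed

lemma field_aut_comp: "field_aut s \<Longrightarrow> field_aut t \<Longrightarrow> field_aut (s \<circ> t)"
  unfolding field_aut_def by (auto intro: bij_comp)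

lemma field_aut_id: "field_aut id"
  unfolding field_aut_def by auto

lemma Gal_id: "id \<in> Gal K"
  unfolding Gal_def by (auto simp: field_aut_id)

lemma Gal_comp: "s \<in> Gal K \<Longrightarrow> t \<in> Gal K \<Longrightarrow> s \<circ> t \<in> Gal K"
  unfolding Gal_def by (auto simp: field_aut_comp)

lemma Gal_inv: "s \<in> Gal K \<Longrightarrow> hinv s \<in> Gal K"
  unfolding Gal_def
proof (auto simp: field_aut_inv)
  fix x assume "field_aut s" "\<forall>x\<in>K. s x = x" "x \<in> K"
  then show "hinv s x = x" by (metis bij_is_inj field_aut_bij inv_f_f)
qed

lemma Gal_aut: "s \<in> Gal K \<Longrightarrow> field_aut s"
  unfolding Gal_def by auto

lemma Gal_fix: "s \<in> Gal K \<Longrightarrow> x \<in> K \<Longrightarrow> s x = x"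
  unfolding Gal_def by auto

lemma Gal_inv_comp: "s \<in> Gal K \<Longrightarrow> hinv s \<circ> s = id"
  by (meson Gal_aut bij_is_inj field_aut_bij inv_o_cancel)

lemma Gal_comp_inv: "s \<in> Gal K \<Longrightarrow> s \<circ> hinv s = id"
  by (meson Gal_aut bij_is_surj field_aut_bij surj_iff)

section \<open>Pointwise vector space\<close>

definition pscale :: "'a::field \<Rightarrow> ('i \<Rightarrow> 'a) \<Rightarrow> ('i \<Rightarrow> 'a)" where
  "pscale c f = (\<lambda>i. c * f i)"

lemma vs_pscale: "vector_space (pscale :: 'a::field \<Rightarrow> ('i \<Rightarrow> 'a) \<Rightarrow> ('i \<Rightarrow> 'a))"
  by unfold_locales (auto simp: pscale_def algebra_simps fun_eq_iff)

lemma gr_scale_pscale: "gr_scale = pscale"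
  by (auto simp: gr_scale_def pscale_def fun_eq_iff)




lemma sum_fun_apply: "(sum f A) i = (\<Sum>a\<in>A. f a i)"
  by (induction A rule: infinite_finite_induct) auto

lemma pscale_apply[simp]: "pscale c f i = c * f i"
  by (simp add: pscale_def)

interpretation pv: vector_space "pscale :: 'a::field \<Rightarrow> ('i \<Rightarrow> 'a) \<Rightarrow> ('i \<Rightarrow> 'a)"
  by (rule vs_pscale)

interpretation pp: vector_space_pair "pscale :: 'a::field \<Rightarrow> ('i \<Rightarrow> 'a) \<Rightarrow> ('i \<Rightarrow> 'a)"
   "pscale :: 'a::field \<Rightarrow> ('j \<Rightarrow> 'a) \<Rightarrow> ('j \<Rightarrow> 'a)"
  by unfold_locales

lemma linear_pscaleI:
  fixes f :: "('i \<Rightarrow> 'a::field) \<Rightarrow> ('j \<Rightarrow> 'a)"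
  assumes "\<And>x y. f (x + y) = f x + f y" "\<And>c x. f (pscale c x) = pscale c (f x)"
  shows "Vector_Spaces.linear pscale pscale f"
  unfolding Vector_Spaces.linear_iff by (auto simp: assms vs_pscale)

lemma pscale_neg: "pscale (- c) x = - pscale c x"
  by (auto simp: pscale_def fun_eq_iff)

lemma pv_sum_apply: "(\<Sum>v\<in>A. pscale (u v) v) i = (\<Sum>v\<in>A. u v * v i)"
  by (simp add: sum_fun_apply)

lemma dim_inj_image:
  fixes f :: "('i \<Rightarrow> 'a::field) \<Rightarrow> ('j \<Rightarrow> 'a)"
  assumes lf: "Vector_Spaces.linear pscale pscale f" and inj: "inj_on f (pv.span S)"
  shows "pv.dim (f ` S) = pv.dim S"
proof -
  obtain B where B: "B \<subseteq> S" "pv.independent B" "S \<subseteq> pv.span B" "card B = pv.dim S"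
    using pv.basis_exists by blast
  have injB: "inj_on f (pv.span B)"
    using inj_on_subset[OF inj pv.span_mono[OF B(1)]] .
  have "pv.independent (f ` B)"
    using pp.linear_independent_injective_image[OF lf B(2) injB] .
  moreover have "card (f ` B) = card B"
    using card_image[OF inj_on_subset[OF injB pv.span_superset]] .
  moreover have "f ` S \<subseteq> pv.span (f ` B)"
    using pp.linear_spans_image[OF lf B(3)] .
  moreover have "f ` B \<subseteq> f ` S" using B(1) by blast
  ultimately show ?thesis using pv.dim_unique[of "f ` B" "f ` S" "card B"] B(4) by simp
qed

lemma indep_from_coeffs:
  fixes f :: "'b \<Rightarrow> ('i \<Rightarrow> 'a::field)"
  assumes fin: "finite B" and inj: "inj_on f B"
    and co: "\<And>w. (\<Sum>b\<in>B. pscale (w b) (f b)) = 0 \<Longrightarrow> \<forall>b\<in>B. w b = 0"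
  shows "pv.independent (f ` B)"
proof (rule pv.independent_if_scalars_zero)
  show "finite (f ` B)" using fin by simp
  fix w x assume w: "(\<Sum>x\<in>f ` B. pscale (w x) x) = 0" and x: "x \<in> f ` B"
  have "(\<Sum>b\<in>B. pscale (w (f b)) (f b)) = 0"
    using w by (simp add: sum.reindex[OF inj])
  then have "\<forall>b\<in>B. w (f b) = 0" by (rule co)
  then show "w x = 0" using x by blast
qed

lemma rank_nullity:
  fixes f :: "('i \<Rightarrow> 'a::field) \<Rightarrow> ('j \<Rightarrow> 'a)"
  assumes lf: "Vector_Spaces.linear pscale pscale f" and V: "pv.subspace V" and F: "finite F" "V \<subseteq> pv.span F"
  shows "pv.dim V = pv.dim {x\<in>V. f x = 0} + pv.dim (f ` V)"
proof -
  define Z where "Z = {x\<in>V. f x = 0}"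
  obtain A where A: "A \<subseteq> Z" "pv.independent A" "Z \<subseteq> pv.span A" "card A = pv.dim Z"
    using pv.basis_exists by blast
  have "A \<subseteq> V" using A(1) Z_def by blast
  then obtain B where B: "A \<subseteq> B" "B \<subseteq> V" "pv.independent B" "V \<subseteq> pv.span B"
    using pv.maximal_independent_subset_extend A(2) by metis
  have finB: "finite B" "card B \<le> card F"
    using pv.independent_span_bound[OF F(1) B(3)] B(2) F(2) by auto
  have dimV: "pv.dim V = card B" using pv.dim_unique[OF B(2) B(4) B(3)] by simp
  define C where "C = B - A"
  have finC: "finite C" using finB C_def by simp
  have fA: "\<And>x. x \<in> A \<Longrightarrow> f x = 0" using A(1) Z_def by blast
  have key: "\<forall>c\<in>C. w c = 0" if w: "(\<Sum>c\<in>C. pscale (w c) (f c)) = 0" for w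
  proof -
    have "f (\<Sum>c\<in>C. pscale (w c) c) = 0"
      using w by (simp add: pp.linear_sum[OF lf] pp.linear_scale[OF lf])
    moreover have "(\<Sum>c\<in>C. pscale (w c) c) \<in> V"
      using B(2) C_def V by (auto intro!: pv.subspace_sum pv.subspace_scale)
    ultimately have "(\<Sum>c\<in>C. pscale (w c) c) \<in> pv.span A" using A(3) Z_def by blast
    then obtain t where t: "(\<Sum>c\<in>C. pscale (w c) c) = (\<Sum>a\<in>A. pscale (t a) a)"
    proof -
      have "finite A" using finB B(1) finite_subset by blast
      then show ?thesis using \<open>(\<Sum>c\<in>C. pscale (w c) c) \<in> pv.span A\<close> pv.span_finite[of A] that by auto
    qed
    define u where "u b = (if b \<in> A then - t b else w b)" for b
    have BAC: "B = A \<union> C" "A \<inter> C = {}" using B(1) C_def by auto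
    have "(\<Sum>b\<in>B. pscale (u b) b) = (\<Sum>b\<in>A. pscale (u b) b) + (\<Sum>b\<in>C. pscale (u b) b)"
      using BAC finB by (simp add: sum.union_disjoint finite_subset)
    also have "\<dots> = - (\<Sum>a\<in>A. pscale (t a) a) + (\<Sum>c\<in>C. pscale (w c) c)"
      using BAC by (auto simp: u_def sum_negf[symmetric] pscale_neg intro!: sum.cong)
    also have "\<dots> = 0" using t by simp
    finally have "(\<Sum>b\<in>B. pscale (u b) b) = 0" .
    then have "\<forall>b\<in>B. u b = 0" using pv.independentD[OF B(3) finB(1) order_refl] by blast
    then show ?thesis using BAC u_def by (metis IntI UnCI empty_iff)
  qed
  have injC: "inj_on f C"
  proof
    fix x y assume xy: "x \<in> C" "y \<in> C" "f x = f y"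
    show "x = y"
    proof (rule ccontr)
      assume ne: "x \<noteq> y"
      define w where "w c = (if c = x then 1 else if c = y then -1 else (0::'a))" for c :: "'i \<Rightarrow> 'a"
      have "(\<Sum>c\<in>C. pscale (w c) (f c)) = pscale (w x) (f x) + pscale (w y) (f y)"
      proof -
        have "(\<Sum>c\<in>C. pscale (w c) (f c)) = (\<Sum>c\<in>{x,y}. pscale (w c) (f c))"
          using xy finC by (intro sum.mono_neutral_right) (auto simp: w_def pscale_def fun_eq_iff)
        then show ?thesis using ne by simp
      qed
      also have "\<dots> = 0"
      proof -
        have "w x = 1" "w y = -1" using ne by (auto simp: w_def)
        then show ?thesis using xy(3) by (simp add: pscale_def fun_eq_iff)
      qed
      finally have "w x = 0" using key xy(1) by blast
      then show False by (simp add: w_def)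
    qed
  qed
  have indC: "pv.independent (f ` C)"
  proof (rule pv.independent_if_scalars_zero)
    show "finite (f ` C)" using finC by simp
    fix w x assume w: "(\<Sum>x\<in>f ` C. pscale (w x) x) = 0" and x: "x \<in> f ` C"
    have "(\<Sum>c\<in>C. pscale (w (f c)) (f c)) = 0"
      using w by (simp add: sum.reindex[OF injC])
    then have "\<forall>c\<in>C. w (f c) = 0" by (rule key)
    then show "w x = 0" using x by blast
  qed
  have spanC: "f ` V \<subseteq> pv.span (f ` C)"
  proof -
    have "f ` V \<subseteq> pv.span (f ` B)" using pp.linear_spans_image[OF lf B(4)] .
    moreover have "f ` B \<subseteq> pv.span (f ` C)"
    proof
      fix z assume "z \<in> f ` B"
      then obtain b where b: "b \<in> B" "z = f b" by blast
      show "z \<in> pv.span (f ` C)"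
      proof (cases "b \<in> A")
        case True then show ?thesis using fA b pv.span_zero by simp
      next
        case False then have "z \<in> f ` C" using b C_def by blast
        then show ?thesis by (rule pv.span_base)
      qed
    qed
    ultimately show ?thesis
      using pv.span_mono[of "f ` B" "pv.span (f ` C)"] pv.span_span[of "f ` C"] by blast
  qed
  have "pv.dim (f ` V) = card (f ` C)"
    using pv.dim_unique[OF _ spanC indC refl] B(2) C_def by blast
  also have "\<dots> = card C" using card_image[OF injC] .
  finally have "pv.dim (f ` V) = card B - card A"
    using C_def B(1) finB by (simp add: card_Diff_subset finite_subset)
  moreover have "card A \<le> card B" using B(1) finB card_mono by blast
  ultimately show ?thesis using dimV A(4) Z_def by simp
qed

lemma dual_le:
  fixes m :: "'i \<Rightarrow> 'j \<Rightarrow> 'a::field"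
  assumes Y: "finite Y" and zero: "\<And>x y. y \<notin> Y \<Longrightarrow> m x y = 0"
  shows "pv.dim ((\<lambda>x. (\<lambda>y. m x y)) ` X) \<le> pv.dim ((\<lambda>y. (\<lambda>x. m x y)) ` Y)"
proof -
  let ?C = "(\<lambda>y. (\<lambda>x. m x y)) ` Y"
  obtain B where B: "B \<subseteq> ?C" "pv.independent B" "?C \<subseteq> pv.span B" "card B = pv.dim ?C"
    using pv.basis_exists by blast
  have finB: "finite B" using B(1) Y finite_subset by blast
  have "\<forall>y\<in>Y. \<exists>u. (\<lambda>x. m x y) = (\<Sum>b\<in>B. pscale (u b) b)"
    using B(3) pv.span_finite[OF finB] by blast
  then obtain u where u: "\<And>y. y \<in> Y \<Longrightarrow> (\<lambda>x. m x y) = (\<Sum>b\<in>B. pscale (u y b) b)"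
    by (rule bchoice[THEN exE]) blast
  define lam where "lam b = (\<lambda>y. if y \<in> Y then u y b else 0)" for b
  have "(\<lambda>x. (\<lambda>y. m x y)) ` X \<subseteq> pv.span (lam ` B)"
  proof
    fix r assume "r \<in> (\<lambda>x. (\<lambda>y. m x y)) ` X"
    then obtain x where r: "r = (\<lambda>y. m x y)" by blast
    have "r = (\<Sum>b\<in>B. pscale (b x) (lam b))"
    proof
      fix y
      show "r y = (\<Sum>b\<in>B. pscale (b x) (lam b)) y"
      proof (cases "y \<in> Y")
        case True
        have "m x y = (\<Sum>b\<in>B. pscale (u y b) b) x" using u[OF True] by (rule fun_cong)
        then show ?thesis using True by (simp add: r lam_def sum_fun_apply mult.commute)
      next
        case False
        then show ?thesis by (simp add: r lam_def sum_fun_apply zero)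
      qed
    qed
    also have "\<dots> \<in> pv.span (lam ` B)"
      by (intro pv.span_sum pv.span_scale pv.span_base) auto
    finally show "r \<in> pv.span (lam ` B)" .
  qed
  then have "pv.dim ((\<lambda>x. (\<lambda>y. m x y)) ` X) \<le> card (lam ` B)"
    using pv.dim_le_card finB by blast
  also have "\<dots> \<le> card B" using card_image_le finB by blast
  finally show ?thesis using B(4) by simp
qed

lemma dual_eq:
  fixes m :: "'i \<Rightarrow> 'j \<Rightarrow> 'a::field"
  assumes X: "finite X" and Y: "finite Y" and zero: "\<And>x y. x \<notin> X \<or> y \<notin> Y \<Longrightarrow> m x y = 0"
  shows "pv.dim ((\<lambda>x. (\<lambda>y. m x y)) ` X) = pv.dim ((\<lambda>y. (\<lambda>x. m x y)) ` Y)"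
proof (rule antisym)
  show "pv.dim ((\<lambda>x. (\<lambda>y. m x y)) ` X) \<le> pv.dim ((\<lambda>y. (\<lambda>x. m x y)) ` Y)"
    using dual_le[of Y m X] Y zero by blast
  show "pv.dim ((\<lambda>y. (\<lambda>x. m x y)) ` Y) \<le> pv.dim ((\<lambda>x. (\<lambda>y. m x y)) ` X)"
    using dual_le[of X "\<lambda>y x. m x y" Y] X zero by blast
qed




lemma dedekind_aux:
  fixes G :: "('a::field \<Rightarrow> 'a) set"
  assumes fin: "finite G" and aut: "\<And>g. g \<in> G \<Longrightarrow> field_aut g"
  shows "card {g\<in>G. c g \<noteq> 0} = n \<Longrightarrow> (\<forall>x. (\<Sum>g\<in>G. c g * g x) = 0) \<Longrightarrow> (\<forall>g\<in>G. c g = 0)"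
proof (induction n arbitrary: c rule: less_induct)
  case (less n c)
  show ?case
  proof (rule ccontr)
    assume "\<not> (\<forall>g\<in>G. c g = 0)"
    then obtain g0 where g0: "g0 \<in> G" "c g0 \<noteq> 0" by blast
    let ?S = "{g\<in>G. c g \<noteq> 0}"
    show False
    proof (cases "?S = {g0}")
      case True
      have "(\<Sum>g\<in>G. c g * g 1) = (\<Sum>g\<in>{g0}. c g * g 1)"
        using True fin g0 by (intro sum.mono_neutral_right) auto
      also have "\<dots> = c g0" using aut[OF g0(1)] by (simp add: field_aut_1)
      finally show False using less.prems(2) g0(2) by simp
    next
      case False
      then obtain g1 where g1: "g1 \<in> G" "c g1 \<noteq> 0" "g1 \<noteq> g0" using g0 by blast
      then obtain y where y: "g1 y \<noteq> g0 y" by blast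
      define c' where "c' g = c g * (g y - g0 y)" for g
      have rel: "\<forall>x. (\<Sum>g\<in>G. c' g * g x) = 0"
      proof
        fix x
        have "(\<Sum>g\<in>G. c' g * g x) = (\<Sum>g\<in>G. c g * g (y * x)) - g0 y * (\<Sum>g\<in>G. c g * g x)"
          by (simp add: c'_def sum_distrib_left sum_subtractf[symmetric] algebra_simps
              field_aut_mult[OF aut])
        also have "\<dots> = 0" using less.prems(2) by simp
        finally show "(\<Sum>g\<in>G. c' g * g x) = 0" .
      qed
      have sub: "{g\<in>G. c' g \<noteq> 0} \<subseteq> ?S - {g0}" by (auto simp: c'_def)
      have "card {g\<in>G. c' g \<noteq> 0} \<le> card (?S - {g0})"
        using sub fin by (intro card_mono) auto
      also have "\<dots> < card ?S" using g0 fin by (intro psubset_card_mono) auto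
      finally have "card {g\<in>G. c' g \<noteq> 0} < n" using less.prems(1) by simp
      then have "\<forall>g\<in>G. c' g = 0" using less.IH rel by blast
      then have "c' g1 = 0" using g1 by blast
      then show False using g1 y by (simp add: c'_def)
    qed
  qed
qed

lemma dedekind:
  fixes G :: "('a::field \<Rightarrow> 'a) set"
  assumes "finite G" "\<And>g. g \<in> G \<Longrightarrow> field_aut g" "\<And>x. (\<Sum>g\<in>G. c g * g x) = 0"
  shows "\<forall>g\<in>G. c g = 0"
  using dedekind_aux[OF assms(1,2)] assms(3) by blast

lemma fixed_in_K: "finite_galois K \<Longrightarrow> (\<And>s. s \<in> Gal K \<Longrightarrow> s x = x) \<Longrightarrow> x \<in> K"
  unfolding finite_galois_def by blast

lemma artin_aux:
  fixes K :: "'a::field set" and B :: "'a set"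
  assumes gal: "finite_galois K" and fin: "finite (Gal K)" and finB: "finite B"
    and ind: "K_indep K B"
  shows "card {b\<in>B. c b \<noteq> 0} = n \<Longrightarrow> (\<forall>g\<in>Gal K. (\<Sum>b\<in>B. c b * g b) = 0) \<Longrightarrow> (\<forall>b\<in>B. c b = 0)"
proof (induction n arbitrary: c rule: less_induct)
  case (less n c)
  show ?case
  proof (rule ccontr)
    assume "\<not> (\<forall>b\<in>B. c b = 0)"
    then obtain b0 where b0: "b0 \<in> B" "c b0 \<noteq> 0" by blast
    let ?S = "{b\<in>B. c b \<noteq> 0}"
    define d where "d b = c b / c b0" for b
    have d0: "d b0 = 1" using b0 by (simp add: d_def)
    have relc: "\<forall>g\<in>Gal K. (\<Sum>b\<in>B. d b * g b) = 0"
    proof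
      fix g assume "g \<in> Gal K"
      then have "(\<Sum>b\<in>B. c b * g b) = 0" using less.prems(2) by blast
      then have "(\<Sum>b\<in>B. c b * g b) / c b0 = 0" by simp
      then show "(\<Sum>b\<in>B. d b * g b) = 0"
        by (simp add: d_def sum_divide_distrib)
    qed
    have fixd: "\<forall>h\<in>Gal K. \<forall>b\<in>B. h (d b) = d b"
    proof (intro ballI)
      fix h b assume h: "h \<in> Gal K" and b: "b \<in> B"
      have ha: "field_aut h" using h Gal_aut by blast
      define e where "e b = h (d b) - d b" for b
      have rele: "\<forall>g\<in>Gal K. (\<Sum>b\<in>B. e b * g b) = 0"
      proof
        fix g assume g: "g \<in> Gal K"
        have hg: "hinv h \<circ> g \<in> Gal K" using Gal_comp[OF Gal_inv[OF h] g] .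
        have hh: "\<And>z. h (hinv h z) = z"
          using Gal_comp_inv[OF h] by (metis comp_apply id_apply)
        have "(\<Sum>b\<in>B. h (d b) * g b) = h (\<Sum>b\<in>B. d b * (hinv h \<circ> g) b)"
          by (simp add: field_aut_sum[OF ha] field_aut_mult[OF ha] hh)
        also have "\<dots> = 0"
        proof -
          have "(\<Sum>b\<in>B. d b * (hinv h \<circ> g) b) = 0" using relc hg by blast
          then show ?thesis using field_aut_0[OF ha] by simp
        qed
        finally have "(\<Sum>b\<in>B. h (d b) * g b) = 0" .
        moreover have "(\<Sum>b\<in>B. d b * g b) = 0" using relc g by blast
        ultimately show "(\<Sum>b\<in>B. e b * g b) = 0"
          by (simp add: e_def left_diff_distrib sum_subtractf)
      qed
      have sub: "{b\<in>B. e b \<noteq> 0} \<subseteq> ?S - {b0}"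
        using d0 field_aut_1[OF ha] field_aut_0[OF ha] by (auto simp: e_def d_def)
      have "card {b\<in>B. e b \<noteq> 0} \<le> card (?S - {b0})"
        using sub finB by (intro card_mono) auto
      also have "\<dots> < card ?S" using b0 finB by (intro psubset_card_mono) auto
      finally have "card {b\<in>B. e b \<noteq> 0} < n" using less.prems(1) by simp
      then have "\<forall>b\<in>B. e b = 0" using less.IH rele by blast
      then show "h (d b) = d b" using b by (simp add: e_def)
    qed
    have dK: "\<forall>b\<in>B. d b \<in> K" using fixd fixed_in_K[OF gal] by blast
    have "(\<Sum>b\<in>B. d b * b) = 0" using relc Gal_id[of K] by fastforce
    then have "\<forall>b\<in>B. d b = 0" using ind dK finB unfolding K_indep_def by blast
    then show False using d0 b0 by simp
  qed
qed

lemma artin: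
  fixes K :: "'a::field set" and B :: "'a set"
  assumes "finite_galois K" "finite (Gal K)" "finite B" "K_indep K B"
    and "\<And>g. g \<in> Gal K \<Longrightarrow> (\<Sum>b\<in>B. c b * g b) = 0"
  shows "\<forall>b\<in>B. c b = 0"
  using artin_aux[OF assms(1-4)] assms(5) by blast




section \<open>K-linear algebra\<close>

lemma subfieldD:
  assumes "subfield_of K"
  shows "0 \<in> K" "1 \<in> K" "x \<in> K \<Longrightarrow> y \<in> K \<Longrightarrow> x + y \<in> K" "x \<in> K \<Longrightarrow> y \<in> K \<Longrightarrow> x * y \<in> K"
    "x \<in> K \<Longrightarrow> - x \<in> K" "x \<in> K \<Longrightarrow> inverse x \<in> K"
  using assms unfolding subfield_of_def by (auto simp: inverse_eq_divide)

lemma subfield_div: "subfield_of K \<Longrightarrow> x \<in> K \<Longrightarrow> y \<in> K \<Longrightarrow> x / y \<in> K"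
  by (simp add: divide_inverse subfieldD)

lemma subfield_sum: "subfield_of K \<Longrightarrow> (\<And>t. t \<in> T \<Longrightarrow> f t \<in> K) \<Longrightarrow> sum f T \<in> K"
  by (induction T rule: infinite_finite_induct) (auto simp: subfieldD)

lemma K_span_finite:
  assumes K: "subfield_of K" and S: "finite S"
  shows "K_span K S = {x. \<exists>c. (\<forall>t\<in>S. c t \<in> K) \<and> x = (\<Sum>t\<in>S. c t * t)}"
proof (rule equalityI; rule subsetI)
  fix x assume "x \<in> K_span K S"
  then obtain T c where T: "finite T" "T \<subseteq> S" "\<forall>t\<in>T. c t \<in> K" "x = (\<Sum>t\<in>T. c t * t)"
    unfolding K_span_def by blast
  define c' where "c' t = (if t \<in> T then c t else 0)" for t
  have "(\<Sum>t\<in>S. c' t * t) = (\<Sum>t\<in>T. c' t * t)"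
    using T S by (intro sum.mono_neutral_right) (auto simp: c'_def)
  also have "\<dots> = x" using T by (simp add: c'_def)
  finally show "x \<in> {x. \<exists>c. (\<forall>t\<in>S. c t \<in> K) \<and> x = (\<Sum>t\<in>S. c t * t)}"
    using T(3) subfieldD(1)[OF K] by (auto simp: c'_def intro!: exI[of _ c'])
next
  fix x assume "x \<in> {x. \<exists>c. (\<forall>t\<in>S. c t \<in> K) \<and> x = (\<Sum>t\<in>S. c t * t)}"
  then show "x \<in> K_span K S" unfolding K_span_def using S by blast
qed

lemma K_span_mono: "S \<subseteq> S' \<Longrightarrow> K_span K S \<subseteq> K_span K S'"
  unfolding K_span_def by blast

lemma K_span_base: "subfield_of K \<Longrightarrow> s \<in> S \<Longrightarrow> s \<in> K_span K S"
  unfolding K_span_def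
  by (rule CollectI, rule exI[of _ "{s}"], rule exI[of _ "\<lambda>_. 1"]) (auto simp: subfieldD)

lemma K_span_trans:
  assumes K: "subfield_of K" and B: "finite B" and S: "S \<subseteq> K_span K B"
  shows "K_span K S \<subseteq> K_span K B"
proof
  fix x assume "x \<in> K_span K S"
  then obtain T c where T: "finite T" "T \<subseteq> S" "\<forall>t\<in>T. c t \<in> K" "x = (\<Sum>t\<in>T. c t * t)"
    unfolding K_span_def by blast
  have "\<forall>t\<in>T. \<exists>d. (\<forall>b\<in>B. d b \<in> K) \<and> t = (\<Sum>b\<in>B. d b * b)"
  proof
    fix t assume "t \<in> T"
    then have "t \<in> K_span K B" using T(2) S by blast
    then show "\<exists>d. (\<forall>b\<in>B. d b \<in> K) \<and> t = (\<Sum>b\<in>B. d b * b)"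
      unfolding K_span_finite[OF K B] by blast
  qed
  then obtain d where d: "\<And>t. t \<in> T \<Longrightarrow> (\<forall>b\<in>B. d t b \<in> K) \<and> t = (\<Sum>b\<in>B. d t b * b)"
    by (rule bchoice[THEN exE]) blast
  have "x = (\<Sum>t\<in>T. c t * (\<Sum>b\<in>B. d t b * b))"
    using T(4) d by (auto intro!: sum.cong)
  also have "\<dots> = (\<Sum>t\<in>T. \<Sum>b\<in>B. c t * d t b * b)"
    by (simp add: sum_distrib_left mult.assoc)
  also have "\<dots> = (\<Sum>b\<in>B. \<Sum>t\<in>T. c t * d t b * b)"
    by (rule sum.swap)
  also have "\<dots> = (\<Sum>b\<in>B. (\<Sum>t\<in>T. c t * d t b) * b)"
    by (simp add: sum_distrib_right)
  finally have x: "x = (\<Sum>b\<in>B. (\<Sum>t\<in>T. c t * d t b) * b)" .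
  have "\<forall>b\<in>B. (\<Sum>t\<in>T. c t * d t b) \<in> K"
    using d T(3) by (auto intro!: subfield_sum[OF K] subfieldD(4)[OF K])
  then show "x \<in> K_span K B" unfolding K_span_finite[OF K B] using x
    by (intro CollectI exI[of _ "\<lambda>b. \<Sum>t\<in>T. c t * d t b"]) simp
qed

lemma K_indepD:
  assumes "K_indep K B" "finite T" "T \<subseteq> B" "\<forall>t\<in>T. c t \<in> K" "(\<Sum>t\<in>T. c t * t) = 0" "t \<in> T"
  shows "c t = 0"
  using assms unfolding K_indep_def by blast

lemma K_span_insert_dep:
  assumes K: "subfield_of K" and ind: "K_indep K B0" and s: "s \<notin> B0"
    and dep: "\<not> K_indep K (insert s B0)"
  shows "s \<in> K_span K B0"
proof -
  obtain T c t0 where T: "finite T" "T \<subseteq> insert s B0" "\<forall>t\<in>T. c t \<in> K" "(\<Sum>t\<in>T. c t * t) = 0"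
    "t0 \<in> T" "c t0 \<noteq> 0"
    using dep unfolding K_indep_def by blast
  show ?thesis
  proof (cases "s \<in> T \<and> c s \<noteq> 0")
    case False
    have "(\<Sum>t\<in>T - {s}. c t * t) = (\<Sum>t\<in>T. c t * t)"
      using False T(1) by (intro sum.mono_neutral_left) auto
    then have "(\<Sum>t\<in>T - {s}. c t * t) = 0" using T(4) by simp
    moreover have "t0 \<in> T - {s}" using False T(5,6) by auto
    moreover have "T - {s} \<subseteq> B0" using T(2) by auto
    ultimately have "c t0 = 0"
      using K_indepD[OF ind, of "T - {s}" c t0] T(1,3) by blast
    then show ?thesis using T(6) by blast
  next
    case True
    have "(\<Sum>t\<in>T. c t * t) = c s * s + (\<Sum>t\<in>T - {s}. c t * t)"
      using True T(1) by (intro sum.remove) auto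
    then have R: "(\<Sum>t\<in>T - {s}. c t * t) = - (c s * s)" using T(4) by (simp add: add_eq_0_iff)
    have "(\<Sum>t\<in>T - {s}. (- c t / c s) * t) = (\<Sum>t\<in>T - {s}. - (c t * t) / c s)"
      by (rule sum.cong) auto
    also have "\<dots> = (\<Sum>t\<in>T - {s}. - (c t * t)) / c s"
      by (rule sum_divide_distrib[symmetric])
    also have "\<dots> = - (\<Sum>t\<in>T - {s}. c t * t) / c s"
      by (simp only: sum_negf)
    also have "\<dots> = s" using R True by simp
    finally have eq: "s = (\<Sum>t\<in>T - {s}. (- c t / c s) * t)" by simp
    have inK: "\<forall>t\<in>T - {s}. - c t / c s \<in> K"
    proof
      fix t assume "t \<in> T - {s}"
      then have "c t \<in> K" using T(3) by blast
      then show "- c t / c s \<in> K"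
        using subfield_div[OF K _ ] subfieldD(5)[OF K] T(3) True by blast
    qed
    have sub: "T - {s} \<subseteq> B0" using T(2) by blast
    have fin: "finite (T - {s})" using T(1) by blast
    show ?thesis unfolding K_span_def
      by (rule CollectI, rule exI[of _ "T - {s}"], rule exI[of _ "\<lambda>t. - c t / c s"])
        (intro conjI fin sub inK eq)
  qed
qed

lemma exists_max_indep:
  assumes "finite V0"
  obtains B0 where "B0 \<subseteq> V0" "K_indep K B0" "\<And>s. s \<in> V0 \<Longrightarrow> s \<notin> B0 \<Longrightarrow> \<not> K_indep K (insert s B0)"
proof -
  let ?P = "\<lambda>B. B \<subseteq> V0 \<and> K_indep K B"
  have "\<exists>A. finite A \<and> maximal A ?P"
  proof (rule maximal_exists[of ?P "card V0" "{}"])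
    show "\<And>A. ?P A \<Longrightarrow> finite A \<and> card A \<le> card V0"
      using assms by (meson card_mono finite_subset)
    show "?P {}" unfolding K_indep_def by auto
  qed
  then obtain A where A: "maximal A ?P" by blast
  show ?thesis
  proof (rule that)
    show "A \<subseteq> V0" "K_indep K A" using A unfolding maximal_def by auto
    fix s assume s: "s \<in> V0" "s \<notin> A"
    show "\<not> K_indep K (insert s A)"
    proof
      assume "K_indep K (insert s A)"
      then have "insert s A = A" using A s \<open>A \<subseteq> V0\<close> unfolding maximal_def by blast
      then show False using s by blast
    qed
  qed
qed

definition phi :: "'a::field set \<Rightarrow> 'a \<Rightarrow> (('a \<Rightarrow> 'a) \<Rightarrow> 'a)" where
  "phi K x = (\<lambda>g. if g \<in> Gal K then g x else 0)"

lemma phi_comb: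
  assumes "\<forall>t\<in>T. c t \<in> K"
  shows "phi K (\<Sum>t\<in>T. c t * t) = (\<Sum>t\<in>T. pscale (c t) (phi K t))"
proof
  fix g
  show "phi K (\<Sum>t\<in>T. c t * t) g = (\<Sum>t\<in>T. pscale (c t) (phi K t)) g"
  proof (cases "g \<in> Gal K")
    case True
    then show ?thesis using assms
      by (auto simp: phi_def sum_fun_apply field_aut_sum[OF Gal_aut[OF True]]
          field_aut_mult[OF Gal_aut[OF True]] Gal_fix intro!: sum.cong)
  qed (simp add: phi_def sum_fun_apply)
qed

lemma phi_span: "x \<in> K_span K S \<Longrightarrow> phi K x \<in> pv.span (phi K ` S)"
proof -
  assume "x \<in> K_span K S"
  then obtain T c where T: "finite T" "T \<subseteq> S" "\<forall>t\<in>T. c t \<in> K" "x = (\<Sum>t\<in>T. c t * t)"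
    unfolding K_span_def by blast
  have "phi K x = (\<Sum>t\<in>T. pscale (c t) (phi K t))" using phi_comb T by blast
  also have "\<dots> \<in> pv.span (phi K ` S)"
    using T(2) by (intro pv.span_sum pv.span_scale pv.span_base) auto
  finally show ?thesis .
qed

lemma phi_inj: "inj (phi K)"
proof
  fix x y assume "phi K x = phi K y"
  then have "phi K x id = phi K y id" by simp
  then show "x = y" by (simp add: phi_def Gal_id)
qed

lemma phi_indep:
  assumes gal: "finite_galois K" and fin: "finite (Gal K)" and B: "finite B" "K_indep K B"
  shows "pv.independent (phi K ` B)"
proof (rule indep_from_coeffs[OF B(1)])
  show "inj_on (phi K) B" using inj_on_subset[OF phi_inj subset_UNIV] .
  fix w assume w0: "(\<Sum>b\<in>B. pscale (w b) (phi K b)) = 0"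
  have "(\<Sum>b\<in>B. w b * g b) = 0" if g: "g \<in> Gal K" for g
  proof -
    have "(\<Sum>b\<in>B. pscale (w b) (phi K b)) g = 0" using w0 by simp
    then show ?thesis using g by (simp add: sum_fun_apply phi_def)
  qed
  then show "\<forall>b\<in>B. w b = 0" by (rule artin[OF gal fin B])
qed

lemma card_K_basis:
  assumes gal: "finite_galois K" and fin: "finite (Gal K)"
    and Bb: "K_is_basis K W B" and V0: "finite V0" "V0 \<subseteq> W" "W \<subseteq> K_span K V0"
  shows "card B = pv.dim (phi K ` V0)"
proof -
  have B: "finite B" "B \<subseteq> W" "K_indep K B" "K_span K B = W"
    using Bb unfolding K_is_basis_def by auto
  have ind: "pv.independent (phi K ` B)" using phi_indep[OF gal fin B(1) B(3)] .
  have c: "card (phi K ` B) = card B" using card_image[OF inj_on_subset[OF phi_inj subset_UNIV]] .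
  have s1: "phi K ` V0 \<subseteq> pv.span (phi K ` B)"
  proof
    fix y assume "y \<in> phi K ` V0"
    then obtain x where x: "x \<in> V0" "y = phi K x" by blast
    then have "x \<in> K_span K B" using V0(2) B(4) by blast
    then show "y \<in> pv.span (phi K ` B)" using x(2) phi_span by simp
  qed
  have s2: "phi K ` B \<subseteq> pv.span (phi K ` V0)"
  proof
    fix y assume "y \<in> phi K ` B"
    then obtain x where x: "x \<in> B" "y = phi K x" by blast
    then have "x \<in> K_span K V0" using V0(3) B(2) by blast
    then show "y \<in> pv.span (phi K ` V0)" using x(2) phi_span by simp
  qed
  have "pv.span (phi K ` V0) = pv.span (phi K ` B)"
    using s1 s2 by (simp only: pv.span_eq)
  then have "pv.dim (phi K ` V0) = pv.dim (phi K ` B)" by (rule pv.span_eq_dim)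
  also have "\<dots> = card B" using pv.dim_eq_card_independent[OF ind] c by simp
  finally show ?thesis by simp
qed




lemma rank_bridge:
  fixes A :: "'a::field mat"
  assumes A: "A \<in> carrier_mat nr nc"
  shows "vec_space.rank nr A = pv.dim ((\<lambda>j. (\<lambda>i. if i < nr then A $$ (i,j) else 0)) ` {..<nc})"
proof -
  interpret vec_space "TYPE('a)" nr .
  define vf where "vf v = (\<lambda>i. if i < nr then v $ i else (0::'a))" for v :: "'a vec"
  have dr: "dim_row A = nr" "dim_col A = nc" using A by auto
  have colsA: "set (cols A) = col A ` {..<nc}" unfolding cols_def using dr by auto
  have img: "(\<lambda>j. (\<lambda>i. if i < nr then A $$ (i,j) else 0)) ` {..<nc} = vf ` set (cols A)"
    unfolding colsA image_image
  proof (rule image_cong[OF refl])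
    fix j assume "j \<in> {..<nc}"
    then show "(\<lambda>i. if i < nr then A $$ (i,j) else 0) = vf (col A j)"
      using dr by (auto simp: vf_def fun_eq_iff)
  qed
  have carr: "set (cols A) \<subseteq> carrier_vec nr" using cols_dim dr by metis
  let ?P = "\<lambda>T. T \<subseteq> set (cols A) \<and> lin_indpt T"
  have P0: "?P {}" unfolding lin_dep_def by auto
  obtain S where S: "finite S" "maximal S ?P"
    using maximal_exists_superset[of "set (cols A)" ?P "{}"] P0 by blast
  have rk: "rank A = card S" using rank_card_indpt[OF A S(2)] .
  have SP: "S \<subseteq> set (cols A)" "lin_indpt S" using S(2) unfolding maximal_def by auto
  have Sc: "S \<subseteq> carrier_vec nr" using SP(1) carr by blast
  have injvf: "inj_on vf (carrier_vec nr)"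
  proof
    fix x y assume xy: "x \<in> carrier_vec nr" "y \<in> carrier_vec nr" "vf x = vf y"
    show "x = y"
    proof (rule eq_vecI)
      show "dim_vec x = dim_vec y" using xy by auto
      fix i assume "i < dim_vec y"
      then have "i < nr" using xy by auto
      then show "x $ i = y $ i" using fun_cong[OF xy(3), of i] by (simp add: vf_def)
    qed
  qed
  have injS: "inj_on vf S" using inj_on_subset[OF injvf Sc] .
  have ind: "pv.independent (vf ` S)"
  proof (rule indep_from_coeffs[OF S(1) injS])
    fix w assume w: "(\<Sum>b\<in>S. pscale (w b) (vf b)) = 0"
    have lc: "lincomb w S = 0\<^sub>v nr"
    proof (rule eq_vecI)
      show "dim_vec (lincomb w S) = dim_vec (0\<^sub>v nr)" using lincomb_dim[OF S(1) Sc] by simp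
      fix i assume "i < dim_vec (0\<^sub>v nr)"
      then have i: "i < nr" by simp
      have "lincomb w S $ i = (\<Sum>x\<in>S. w x * x $ i)" using lincomb_index[OF i Sc] .
      also have "\<dots> = (\<Sum>b\<in>S. pscale (w b) (vf b)) i"
        using i by (simp add: sum_fun_apply vf_def)
      also have "\<dots> = 0" using w by simp
      finally show "lincomb w S $ i = 0\<^sub>v nr $ i" using i by simp
    qed
    show "\<forall>b\<in>S. w b = 0"
    proof (rule ccontr)
      assume "\<not> (\<forall>b\<in>S. w b = 0)"
      then obtain s0 where s0: "s0 \<in> S" "w s0 \<noteq> 0" by blast
      have "lin_dep S" by (rule lin_dep_crit[OF S(1) order_refl _ s0(1)]) (use s0 lc in auto)
      then show False using SP(2) by blast
    qed
  qed
  have spn: "vf ` set (cols A) \<subseteq> pv.span (vf ` S)"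
  proof
    fix y assume "y \<in> vf ` set (cols A)"
    then obtain c where c: "c \<in> set (cols A)" "y = vf c" by blast
    show "y \<in> pv.span (vf ` S)"
    proof (cases "c \<in> S")
      case True
      then show ?thesis using c(2) by (simp add: pv.span_base)
    next
      case False
      have "\<not> ?P (S \<union> {c})"
      proof
        assume "?P (S \<union> {c})"
        then have "S \<union> {c} = S" using S(2) unfolding maximal_def by blast
        then show False using False by blast
      qed
      then have "lin_dep (S \<union> {c})" using SP(1) c(1) by blast
      moreover have "c \<in> carrier_vec nr" using c(1) carr by blast
      ultimately have "c \<in> span S" using lin_dep_iff_in_span[OF Sc SP(2) _ False] by simp
      then obtain a where a: "lincomb a S = c" using finite_in_span[OF S(1) Sc] by blast
      have "y = (\<Sum>s\<in>S. pscale (a s) (vf s))"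
      proof
        fix i
        show "y i = (\<Sum>s\<in>S. pscale (a s) (vf s)) i"
        proof (cases "i < nr")
          case True
          have "y i = lincomb a S $ i" using c(2) a True by (simp add: vf_def)
          also have "\<dots> = (\<Sum>x\<in>S. a x * x $ i)" using lincomb_index[OF True Sc] .
          finally show ?thesis using True by (simp add: sum_fun_apply vf_def)
        next
          case False
          then show ?thesis using c(2) by (simp add: sum_fun_apply vf_def)
        qed
      qed
      also have "\<dots> \<in> pv.span (vf ` S)"
        by (intro pv.span_sum pv.span_scale pv.span_base) auto
      finally show ?thesis .
    qed
  qed
  have sub: "vf ` S \<subseteq> vf ` set (cols A)" using SP(1) by blast
  have "pv.dim (vf ` set (cols A)) = card (vf ` S)"
    using pv.dim_unique[OF sub spn ind refl] .
  also have "\<dots> = card S" using card_image[OF injS] .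
  finally show ?thesis using rk img by simp
qed




definition delta :: "('a \<Rightarrow> 'a) \<Rightarrow> (('a \<Rightarrow> 'a) \<Rightarrow> 'a::field)" where
  "delta h = (\<lambda>g. if g = h then 1 else 0)"

definition rho :: "('a \<Rightarrow> 'a) list \<Rightarrow> (('a \<Rightarrow> 'a) \<Rightarrow> 'a::field) \<Rightarrow> (nat \<Rightarrow> 'a)" where
  "rho gs f = (\<lambda>i. if i < length gs then f (gs ! i) else 0)"

definition Em :: "('a \<Rightarrow> 'a) set \<Rightarrow> 'a list \<Rightarrow> (('a \<Rightarrow> 'a) \<Rightarrow> 'a::field) \<Rightarrow> (nat \<Rightarrow> 'a)" where
  "Em G bs u = (\<lambda>j. if j < length bs then gr_act G u (bs ! j) else 0)"

lemma grp_ring_subspace: "pv.subspace (grp_ring G)"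
  unfolding pv.subspace_def grp_ring_def by (auto simp: pscale_def)

lemma grp_ring_span: 
  assumes "finite G"
  shows "grp_ring G \<subseteq> pv.span (delta ` G)"
proof
  fix f assume f: "f \<in> grp_ring G"
  have "f = (\<Sum>g\<in>G. pscale (f g) (delta g))"
  proof
    fix k
    show "f k = (\<Sum>g\<in>G. pscale (f g) (delta g)) k"
    proof (cases "k \<in> G")
      case True
      have "(\<Sum>g\<in>G. pscale (f g) (delta g)) k = (\<Sum>g\<in>G. if k = g then f g else 0)"
        by (auto simp: sum_fun_apply delta_def intro!: sum.cong)
      also have "\<dots> = f k" using True assms by (simp add: sum.delta)
      finally show ?thesis by simp
    next
      case False
      then have "f k = 0" using f by (simp add: grp_ring_def)
      moreover have "(\<Sum>g\<in>G. pscale (f g) (delta g)) k = 0"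
        using False by (auto simp: sum_fun_apply delta_def intro!: sum.neutral)
      ultimately show ?thesis by simp
    qed
  qed
  also have "\<dots> \<in> pv.span (delta ` G)"
    by (intro pv.span_sum pv.span_scale pv.span_base) auto
  finally show "f \<in> pv.span (delta ` G)" .
qed

lemma delta_in: "h \<in> G \<Longrightarrow> delta h \<in> grp_ring G"
  by (auto simp: delta_def grp_ring_def)

lemma comp_prod_linear: "Vector_Spaces.linear pscale pscale (\<lambda>f. comp_prod G f a)"
proof (rule linear_pscaleI)
  fix x y :: "('a \<Rightarrow> 'a) \<Rightarrow> 'a"
  show "comp_prod G (x + y) a = comp_prod G x a + comp_prod G y a"
  proof
    fix k
    show "comp_prod G (x + y) a k = (comp_prod G x a + comp_prod G y a) k"
    proof (cases "k \<in> G")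
      case True
      have e: "\<And>g h. (if g \<circ> h = k then (x + y) g * g (a h) else 0) =
          (if g \<circ> h = k then x g * g (a h) else 0) + (if g \<circ> h = k then y g * g (a h) else 0)"
        by (simp add: distrib_right)
      have "comp_prod G (x + y) a k = (\<Sum>g\<in>G. \<Sum>h\<in>G. (if g \<circ> h = k then x g * g (a h) else 0)
          + (if g \<circ> h = k then y g * g (a h) else 0))"
        using True unfolding comp_prod_def e by simp
      also have "\<dots> = comp_prod G x a k + comp_prod G y a k"
        using True unfolding comp_prod_def by (simp add: sum.distrib)
      finally show ?thesis by simp
    qed (simp add: comp_prod_def)
  qed
next
  fix c and x :: "('a \<Rightarrow> 'a) \<Rightarrow> 'a"
  show "comp_prod G (pscale c x) a = pscale c (comp_prod G x a)"
  proof
    fix k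
    show "comp_prod G (pscale c x) a k = pscale c (comp_prod G x a) k"
    proof (cases "k \<in> G")
      case True
      have "comp_prod G (pscale c x) a k = (\<Sum>g\<in>G. \<Sum>h\<in>G. c * (if g \<circ> h = k then x g * g (a h) else 0))"
        using True unfolding comp_prod_def by (auto intro!: sum.cong simp: mult.assoc)
      also have "\<dots> = pscale c (comp_prod G x a) k"
        using True unfolding comp_prod_def by (simp add: sum_distrib_left)
      finally show ?thesis .
    qed (simp add: comp_prod_def)
  qed
qed

lemma rho_linear: "Vector_Spaces.linear pscale pscale (rho gs)"
  by (rule linear_pscaleI) (auto simp: rho_def fun_eq_iff)

lemma Em_linear: "Vector_Spaces.linear pscale pscale (Em G bs)"
  by (rule linear_pscaleI)
    (auto simp: Em_def gr_act_def fun_eq_iff sum.distrib distrib_right sum_distrib_left mult.assoc)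




lemma Gal_comp_eq:
  assumes h: "h \<in> Gal K"
  shows "h \<circ> h' = k \<longleftrightarrow> h' = hinv h \<circ> k"
proof
  assume "h \<circ> h' = k"
  then have "hinv h \<circ> (h \<circ> h') = hinv h \<circ> k" by simp
  then show "h' = hinv h \<circ> k" using Gal_inv_comp[OF h] by (simp add: o_assoc)
next
  assume "h' = hinv h \<circ> k"
  then have "h \<circ> h' = (h \<circ> hinv h) \<circ> k" by (simp add: o_assoc)
  then show "h \<circ> h' = k" using Gal_comp_inv[OF h] by simp
qed

lemma comp_prod_delta:
  assumes fin: "finite (Gal K)" and h: "h \<in> Gal K"
  shows "comp_prod (Gal K) (delta h) a = (\<lambda>k. if k \<in> Gal K then h (a (hinv h \<circ> k)) else 0)"
proof
  fix k
  show "comp_prod (Gal K) (delta h) a k = (if k \<in> Gal K then h (a (hinv h \<circ> k)) else 0)"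
  proof (cases "k \<in> Gal K")
    case True
    have "comp_prod (Gal K) (delta h) a k
        = (\<Sum>g\<in>Gal K. \<Sum>h'\<in>Gal K. if g \<circ> h' = k then delta h g * g (a h') else 0)"
      using True by (simp add: comp_prod_def)
    also have "\<dots> = (\<Sum>g\<in>Gal K. if h = g then (\<Sum>h'\<in>Gal K. if h \<circ> h' = k then h (a h') else 0) else 0)"
      by (rule sum.cong) (auto simp: delta_def intro!: sum.neutral sum.cong)
    also have "\<dots> = (\<Sum>h'\<in>Gal K. if h \<circ> h' = k then h (a h') else 0)"
      using fin h by (simp add: sum.delta)
    also have "\<dots> = (\<Sum>h'\<in>Gal K. if hinv h \<circ> k = h' then h (a h') else 0)"
    proof (rule sum.cong[OF refl])
      fix h' assume "h' \<in> Gal K"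
      show "(if h \<circ> h' = k then h (a h') else 0) = (if hinv h \<circ> k = h' then h (a h') else 0)"
        using Gal_comp_eq[OF h, of h' k] by auto
    qed
    also have "\<dots> = h (a (hinv h \<circ> k))"
      using fin Gal_comp[OF Gal_inv[OF h] True] by (simp add: sum.delta')
    finally show ?thesis using True by simp
  qed (simp add: comp_prod_def)
qed

lemma gr_act_comp:
  assumes fin: "finite (Gal K)"
  shows "gr_act (Gal K) (comp_prod (Gal K) f a) x = gr_act (Gal K) f (gr_act (Gal K) a x)"
proof -
  let ?G = "Gal K"
  have "gr_act ?G (comp_prod ?G f a) x
      = (\<Sum>k\<in>?G. (\<Sum>g\<in>?G. \<Sum>h\<in>?G. if g \<circ> h = k then f g * g (a h) else 0) * k x)"
    unfolding gr_act_def comp_prod_def by (intro sum.cong) auto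
  also have "\<dots> = (\<Sum>k\<in>?G. \<Sum>g\<in>?G. \<Sum>h\<in>?G. if g \<circ> h = k then f g * g (a h) * k x else 0)"
  proof -
    have ifm: "\<And>P A c. (if P then A else 0) * c = (if P then A * c else (0::'a))" by simp
    show ?thesis by (intro sum.cong refl) (simp only: sum_distrib_right ifm)
  qed
  also have "\<dots> = (\<Sum>g\<in>?G. \<Sum>k\<in>?G. \<Sum>h\<in>?G. if g \<circ> h = k then f g * g (a h) * k x else 0)"
    by (rule sum.swap)
  also have "\<dots> = (\<Sum>g\<in>?G. \<Sum>h\<in>?G. \<Sum>k\<in>?G. if g \<circ> h = k then f g * g (a h) * k x else 0)"
    by (rule sum.cong[OF refl]) (rule sum.swap)
  also have "\<dots> = (\<Sum>g\<in>?G. \<Sum>h\<in>?G. f g * g (a h) * (g \<circ> h) x)"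
    using fin by (intro sum.cong refl) (simp add: sum.delta' Gal_comp)
  also have "\<dots> = (\<Sum>g\<in>?G. f g * g (\<Sum>h\<in>?G. a h * h x))"
    by (intro sum.cong refl)
      (simp add: field_aut_sum[OF Gal_aut] field_aut_mult[OF Gal_aut] sum_distrib_left mult.assoc)
  also have "\<dots> = gr_act ?G f (gr_act ?G a x)" by (simp add: gr_act_def)
  finally show ?thesis .
qed

lemma gr_act_delta:
  assumes fin: "finite G" and h: "h \<in> G"
  shows "gr_act G (delta h) y = h y"
proof -
  have "gr_act G (delta h) y = (\<Sum>g\<in>G. if h = g then g y else 0)"
    unfolding gr_act_def delta_def by (intro sum.cong) auto
  also have "\<dots> = h y" using fin h by (simp add: sum.delta)
  finally show ?thesis .
qed

lemma gr_act_Klin: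
  assumes c: "\<forall>t\<in>T. c t \<in> K"
  shows "gr_act (Gal K) u (\<Sum>t\<in>T. c t * t) = (\<Sum>t\<in>T. c t * gr_act (Gal K) u t)"
proof -
  have "gr_act (Gal K) u (\<Sum>t\<in>T. c t * t) = (\<Sum>g\<in>Gal K. u g * (\<Sum>t\<in>T. c t * g t))"
    unfolding gr_act_def using c
    by (intro sum.cong refl)
      (simp add: field_aut_sum[OF Gal_aut] field_aut_mult[OF Gal_aut] Gal_fix)
  also have "\<dots> = (\<Sum>t\<in>T. c t * gr_act (Gal K) u t)"
    unfolding gr_act_def by (simp add: sum_distrib_left sum.swap[of _ "Gal K"] algebra_simps)
  finally show ?thesis .
qed




lemma K_span_comb:
  assumes K: "subfield_of K" and S: "finite S" and T: "finite T"
    and y: "\<forall>t\<in>T. y t \<in> K_span K S" and c: "\<forall>t\<in>T. c t \<in> K"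
  shows "(\<Sum>t\<in>T. c t * y t) \<in> K_span K S"
proof -
  have "\<forall>t\<in>T. \<exists>d. (\<forall>b\<in>S. d b \<in> K) \<and> y t = (\<Sum>b\<in>S. d b * b)"
  proof
    fix t assume "t \<in> T"
    then have "y t \<in> K_span K S" using y by blast
    then show "\<exists>d. (\<forall>b\<in>S. d b \<in> K) \<and> y t = (\<Sum>b\<in>S. d b * b)"
      unfolding K_span_finite[OF K S] by blast
  qed
  then obtain d where d: "\<And>t. t \<in> T \<Longrightarrow> (\<forall>b\<in>S. d t b \<in> K) \<and> y t = (\<Sum>b\<in>S. d t b * b)"
    by (rule bchoice[THEN exE]) blast
  have "(\<Sum>t\<in>T. c t * y t) = (\<Sum>t\<in>T. c t * (\<Sum>b\<in>S. d t b * b))"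
    using d by (auto intro!: sum.cong)
  also have "\<dots> = (\<Sum>t\<in>T. \<Sum>b\<in>S. c t * d t b * b)"
    by (simp add: sum_distrib_left mult.assoc)
  also have "\<dots> = (\<Sum>b\<in>S. \<Sum>t\<in>T. c t * d t b * b)"
    by (rule sum.swap)
  also have "\<dots> = (\<Sum>b\<in>S. (\<Sum>t\<in>T. c t * d t b) * b)"
    by (simp add: sum_distrib_right)
  finally have x: "(\<Sum>t\<in>T. c t * y t) = (\<Sum>b\<in>S. (\<Sum>t\<in>T. c t * d t b) * b)" .
  have "\<forall>b\<in>S. (\<Sum>t\<in>T. c t * d t b) \<in> K"
    using d c by (auto intro!: subfield_sum[OF K] subfieldD(4)[OF K])
  then show ?thesis unfolding K_span_finite[OF K S] using x
    by (intro CollectI exI[of _ "\<lambda>b. \<Sum>t\<in>T. c t * d t b"]) simp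
qed

lemma gr_act_Klin2:
  assumes c: "\<forall>t\<in>T. c t \<in> K"
  shows "gr_act (Gal K) u (\<Sum>t\<in>T. c t * f t) = (\<Sum>t\<in>T. c t * gr_act (Gal K) u (f t))"
proof -
  have "gr_act (Gal K) u (\<Sum>t\<in>T. c t * f t) = (\<Sum>g\<in>Gal K. u g * (\<Sum>t\<in>T. c t * g (f t)))"
    unfolding gr_act_def using c
    by (intro sum.cong refl)
      (simp add: field_aut_sum[OF Gal_aut] field_aut_mult[OF Gal_aut] Gal_fix)
  also have "\<dots> = (\<Sum>t\<in>T. c t * gr_act (Gal K) u (f t))"
    unfolding gr_act_def by (simp add: sum_distrib_left sum.swap[of _ "Gal K"] algebra_simps)
  finally show ?thesis .
qed

lemma set_img: "set xs = (\<lambda>j. xs ! j) ` {..<length xs}"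
  by (metis atLeast_upt list.set_map map_nth)

context
  fixes K :: "'a::field set" and gs :: "('a \<Rightarrow> 'a) list"
    and a :: "('a \<Rightarrow> 'a) \<Rightarrow> 'a" and \<beta> :: "'a list"
  assumes gal: "finite_galois K"
    and gsG: "set gs = Gal K"
    and aU: "a \<in> grp_ring (Gal K)"
    and bb: "K_is_basis K UNIV (set \<beta>)"
begin

lemma finG: "finite (Gal K)" using gsG by (metis finite_set)

lemma subK: "subfield_of K" using gal unfolding finite_galois_def by blast

lemma beta_rep: "\<exists>c. (\<forall>t\<in>set \<beta>. c t \<in> K) \<and> x = (\<Sum>t\<in>set \<beta>. c t * t)"
proof -
  have "x \<in> K_span K (set \<beta>)" using bb unfolding K_is_basis_def by blast
  then show ?thesis unfolding K_span_finite[OF subK finite_set] by blast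
qed

lemma gr_act_zero:
  assumes u: "u \<in> grp_ring (Gal K)" and z: "\<And>t. t \<in> set \<beta> \<Longrightarrow> gr_act (Gal K) u t = 0"
  shows "u = 0"
proof -
  have "(\<Sum>g\<in>Gal K. u g * g x) = 0" for x
  proof -
    obtain c where c: "\<forall>t\<in>set \<beta>. c t \<in> K" "x = (\<Sum>t\<in>set \<beta>. c t * t)" using beta_rep by blast
    have "gr_act (Gal K) u x = (\<Sum>t\<in>set \<beta>. c t * gr_act (Gal K) u t)"
      using gr_act_Klin[OF c(1)] c(2) by simp
    also have "\<dots> = 0" using z by simp
    finally show ?thesis by (simp add: gr_act_def)
  qed
  then have "\<forall>g\<in>Gal K. u g = 0" by (intro dedekind[OF finG]) (auto intro: Gal_aut)
  then show "u = 0" using u by (auto simp: grp_ring_def fun_eq_iff)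
qed

lemma span_in_U: "X \<subseteq> grp_ring (Gal K) \<Longrightarrow> pv.span X \<subseteq> grp_ring (Gal K)"
  using pv.span_minimal[OF _ grp_ring_subspace] by blast

lemma Em_inj: "inj_on (Em (Gal K) \<beta>) (grp_ring (Gal K))"
  unfolding pp.linear_inj_on_iff_eq_0[OF Em_linear grp_ring_subspace]
proof (intro ballI impI)
  fix u assume u: "u \<in> grp_ring (Gal K)" and e: "Em (Gal K) \<beta> u = 0"
  show "u = 0"
  proof (rule gr_act_zero[OF u])
    fix t assume "t \<in> set \<beta>"
    then obtain j where j: "j < length \<beta>" "t = \<beta> ! j" by (metis in_set_conv_nth)
    have "Em (Gal K) \<beta> u j = 0" using e by simp
    then show "gr_act (Gal K) u t = 0" using j by (simp add: Em_def)
  qed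
qed

lemma rho_inj: "inj_on (rho gs) (grp_ring (Gal K))"
  unfolding pp.linear_inj_on_iff_eq_0[OF rho_linear grp_ring_subspace]
proof (intro ballI impI)
  fix u assume u: "u \<in> grp_ring (Gal K)" and e: "rho gs u = 0"
  show "u = 0"
  proof
    fix g
    show "u g = 0 g"
    proof (cases "g \<in> Gal K")
      case True
      then obtain i where i: "i < length gs" "g = gs ! i" using gsG by (metis in_set_conv_nth)
      have "rho gs u i = 0" using e by simp
      then show ?thesis using i by (simp add: rho_def)
    next
      case False
      then show ?thesis using u by (simp add: grp_ring_def)
    qed
  qed
qed

lemma dim_rho: "X \<subseteq> grp_ring (Gal K) \<Longrightarrow> pv.dim (rho gs ` X) = pv.dim X"
  using dim_inj_image[OF rho_linear inj_on_subset[OF rho_inj span_in_U]] by blast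

lemma dim_Em: "X \<subseteq> grp_ring (Gal K) \<Longrightarrow> pv.dim (Em (Gal K) \<beta> ` X) = pv.dim X"
  using dim_inj_image[OF Em_linear inj_on_subset[OF Em_inj span_in_U]] by blast


lemma Lq_eq: "L_quot_dim (grp_ring (Gal K)) (Ann (Gal K) a)
    = pv.dim ((\<lambda>h. comp_prod (Gal K) (delta h) a) ` Gal K)"
proof -
  let ?U = "grp_ring (Gal K)" and ?T = "\<lambda>f. comp_prod (Gal K) f a"
  have Ann: "Ann (Gal K) a = {x\<in>?U. ?T x = 0}"
    unfolding Ann_def by (simp add: zero_fun_def)
  have rn: "pv.dim ?U = pv.dim {x\<in>?U. ?T x = 0} + pv.dim (?T ` ?U)"
    using rank_nullity[OF comp_prod_linear grp_ring_subspace _ grp_ring_span[OF finG]] finG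
    by blast
  have "L_quot_dim ?U (Ann (Gal K) a) = pv.dim (?T ` ?U)"
    unfolding L_quot_dim_def gr_scale_pscale Ann using rn by simp
  also have "\<dots> = pv.dim ((\<lambda>h. ?T (delta h)) ` Gal K)"
  proof (rule pv.span_eq_dim)
    have s1: "?T ` ?U \<subseteq> pv.span ((\<lambda>h. ?T (delta h)) ` Gal K)"
    proof -
      have "?T ` ?U \<subseteq> pv.span (?T ` delta ` Gal K)"
        using pp.linear_spans_image[OF comp_prod_linear grp_ring_span[OF finG]] .
      then show ?thesis by (simp add: image_image)
    qed
    have s2: "(\<lambda>h. ?T (delta h)) ` Gal K \<subseteq> pv.span (?T ` ?U)"
    proof
      fix y assume "y \<in> (\<lambda>h. ?T (delta h)) ` Gal K"
      then obtain h where h: "h \<in> Gal K" "y = ?T (delta h)" by blast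
      then have "y \<in> ?T ` ?U" using delta_in[OF h(1)] by blast
      then show "y \<in> pv.span (?T ` ?U)" by (rule pv.span_base)
    qed
    show "pv.span (?T ` ?U) = pv.span ((\<lambda>h. ?T (delta h)) ` Gal K)"
      using s1 s2 by (simp only: pv.span_eq)
  qed
  finally show ?thesis .
qed

lemma D0_U: "(\<lambda>h. comp_prod (Gal K) (delta h) a) ` Gal K \<subseteq> grp_ring (Gal K)"
  by (auto simp: comp_prod_def grp_ring_def)

lemma phiV_U: "phi K ` X \<subseteq> grp_ring (Gal K)"
  by (auto simp: phi_def grp_ring_def)

lemma gs_img: "Gal K = (\<lambda>j. gs ! j) ` {..<length gs}"
  unfolding gsG[symmetric] by (rule set_img)

lemma dickson_eq: "vec_space.rank (length gs) (dickson_mat gs a)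
    = pv.dim ((\<lambda>h. comp_prod (Gal K) (delta h) a) ` Gal K)"
proof -
  let ?N = "length gs"
  let ?D0 = "(\<lambda>h. comp_prod (Gal K) (delta h) a) ` Gal K"
  have car: "dickson_mat gs a \<in> carrier_mat ?N ?N" by (simp add: dickson_mat_def)
  have "(\<lambda>j. (\<lambda>i. if i < ?N then dickson_mat gs a $$ (i,j) else 0)) ` {..<?N} = rho gs ` ?D0"
  proof -
    have "rho gs ` ?D0 = (\<lambda>j. rho gs (comp_prod (Gal K) (delta (gs ! j)) a)) ` {..<?N}"
      by (subst gs_img) (simp add: image_image)
    also have "\<dots> = (\<lambda>j. (\<lambda>i. if i < ?N then dickson_mat gs a $$ (i,j) else 0)) ` {..<?N}"
    proof (rule image_cong[OF refl])
      fix j assume j: "j \<in> {..<?N}"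
      then have gj: "gs ! j \<in> Gal K" using nth_mem[of j gs] gsG by simp
      show "rho gs (comp_prod (Gal K) (delta (gs ! j)) a)
          = (\<lambda>i. if i < ?N then dickson_mat gs a $$ (i,j) else 0)"
      proof
        fix i
        show "rho gs (comp_prod (Gal K) (delta (gs ! j)) a) i
            = (if i < ?N then dickson_mat gs a $$ (i,j) else 0)"
        proof (cases "i < ?N")
          case True
          then have gi: "gs ! i \<in> Gal K" using nth_mem[of i gs] gsG by simp
          show ?thesis using True j gi
            by (simp add: rho_def comp_prod_delta[OF finG gj] dickson_mat_def)
        qed (simp add: rho_def)
      qed
    qed
    finally show ?thesis by simp
  qed
  then have "vec_space.rank ?N (dickson_mat gs a) = pv.dim (rho gs ` ?D0)"
    using rank_bridge[OF car] by simp
  also have "\<dots> = pv.dim ?D0" using dim_rho[OF D0_U] .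
  finally show ?thesis .
qed

lemma moore_eq: "vec_space.rank (length gs) (moore_mat gs (map (gr_act (Gal K) a) \<beta>))
    = pv.dim (phi K ` set (map (gr_act (Gal K) a) \<beta>))"
proof -
  let ?N = "length gs" and ?v = "map (gr_act (Gal K) a) \<beta>"
  let ?M = "moore_mat gs ?v"
  have car: "?M \<in> carrier_mat ?N (length ?v)" by (simp add: moore_mat_def)
  have "(\<lambda>j. (\<lambda>i. if i < ?N then ?M $$ (i,j) else 0)) ` {..<length ?v} = rho gs ` phi K ` set ?v"
  proof -
    have sv: "set ?v = (\<lambda>j. ?v ! j) ` {..<length ?v}" by (rule set_img)
    have "rho gs ` phi K ` set ?v = (\<lambda>j. rho gs (phi K (?v ! j))) ` {..<length ?v}"
      by (subst sv) (simp add: image_image)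
    also have "\<dots> = (\<lambda>j. (\<lambda>i. if i < ?N then ?M $$ (i,j) else 0)) ` {..<length ?v}"
    proof (rule image_cong[OF refl])
      fix j assume j: "j \<in> {..<length ?v}"
      show "rho gs (phi K (?v ! j)) = (\<lambda>i. if i < ?N then ?M $$ (i,j) else 0)"
      proof
        fix i
        show "rho gs (phi K (?v ! j)) i = (if i < ?N then ?M $$ (i,j) else 0)"
        proof (cases "i < ?N")
          case True
          then have gi: "gs ! i \<in> Gal K" using nth_mem[of i gs] gsG by simp
          show ?thesis using True j gi
            by (simp add: rho_def phi_def moore_mat_def)
        qed (simp add: rho_def)
      qed
    qed
    finally show ?thesis by simp
  qed
  then have "vec_space.rank ?N ?M = pv.dim (rho gs ` phi K ` set ?v)"
    using rank_bridge[OF car] by simp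
  also have "\<dots> = pv.dim (phi K ` set ?v)" using dim_rho[OF phiV_U] .
  finally show ?thesis .
qed

lemma D0_eq: "pv.dim ((\<lambda>h. comp_prod (Gal K) (delta h) a) ` Gal K)
    = pv.dim (phi K ` set (map (gr_act (Gal K) a) \<beta>))"
proof -
  let ?D0 = "(\<lambda>h. comp_prod (Gal K) (delta h) a) ` Gal K"
  let ?n = "length \<beta>"
  define m where "m h j = (if h \<in> Gal K \<and> j < ?n then h (gr_act (Gal K) a (\<beta> ! j)) else 0)" for h j
  have "pv.dim ?D0 = pv.dim (Em (Gal K) \<beta> ` ?D0)" using dim_Em[OF D0_U] by simp
  also have "Em (Gal K) \<beta> ` ?D0 = (\<lambda>x. (\<lambda>y. m x y)) ` Gal K"
    unfolding image_image
  proof (rule image_cong[OF refl])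
    fix h assume h: "h \<in> Gal K"
    show "Em (Gal K) \<beta> (comp_prod (Gal K) (delta h) a) = (\<lambda>y. m h y)"
      using h by (auto simp: Em_def m_def fun_eq_iff gr_act_comp[OF finG] gr_act_delta[OF finG])
  qed
  also have "pv.dim ((\<lambda>x. (\<lambda>y. m x y)) ` Gal K) = pv.dim ((\<lambda>y. (\<lambda>x. m x y)) ` {..<?n})"
    by (rule dual_eq[OF finG finite_lessThan]) (auto simp: m_def)
  also have "(\<lambda>y. (\<lambda>x. m x y)) ` {..<?n} = phi K ` set (map (gr_act (Gal K) a) \<beta>)"
  proof -
    have sv: "set (map (gr_act (Gal K) a) \<beta>) = (\<lambda>j. gr_act (Gal K) a (\<beta> ! j)) ` {..<?n}"
      using set_img[of "map (gr_act (Gal K) a) \<beta>"] by simp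
    show ?thesis unfolding sv image_image
      by (rule image_cong[OF refl]) (auto simp: m_def phi_def fun_eq_iff)
  qed
  finally show ?thesis .
qed

lemma rk_eq: "rk_K K (Gal K) a = pv.dim (phi K ` set (map (gr_act (Gal K) a) \<beta>))"
proof -
  let ?W = "range (gr_act (Gal K) a)" and ?V0 = "set (map (gr_act (Gal K) a) \<beta>)"
  have V0W: "?V0 \<subseteq> ?W" by auto
  have WV0: "?W \<subseteq> K_span K ?V0"
  proof
    fix y assume "y \<in> ?W"
    then obtain x where y: "y = gr_act (Gal K) a x" by blast
    obtain c where c: "\<forall>t\<in>set \<beta>. c t \<in> K" "x = (\<Sum>t\<in>set \<beta>. c t * t)" using beta_rep by blast
    have "y = (\<Sum>t\<in>set \<beta>. c t * gr_act (Gal K) a t)" using gr_act_Klin[OF c(1)] c(2) y by simp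
    also have "\<dots> \<in> K_span K ?V0"
    proof (rule K_span_comb[OF subK finite_set finite_set])
      show "\<forall>t\<in>set \<beta>. gr_act (Gal K) a t \<in> K_span K ?V0"
        using K_span_base[OF subK] by simp
    qed (rule c(1))
    finally show "y \<in> K_span K ?V0" .
  qed
  obtain B0 where B0: "B0 \<subseteq> ?V0" "K_indep K B0"
      "\<And>s. s \<in> ?V0 \<Longrightarrow> s \<notin> B0 \<Longrightarrow> \<not> K_indep K (insert s B0)"
    using exists_max_indep[OF finite_set] by blast
  have finB0: "finite B0" using B0(1) finite_subset by blast
  have V0B0: "?V0 \<subseteq> K_span K B0"
  proof
    fix s assume s: "s \<in> ?V0"
    show "s \<in> K_span K B0"
    proof (cases "s \<in> B0")
      case True then show ?thesis by (rule K_span_base[OF subK])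
    next
      case False show ?thesis using K_span_insert_dep[OF subK B0(2) False B0(3)[OF s False]] .
    qed
  qed
  have spanB0: "K_span K B0 = ?W"
  proof (rule equalityI)
    show "K_span K B0 \<subseteq> ?W"
    proof
      fix x assume "x \<in> K_span K B0"
      then obtain T c where T: "finite T" "T \<subseteq> B0" "\<forall>t\<in>T. c t \<in> K" "x = (\<Sum>t\<in>T. c t * t)"
        unfolding K_span_def by blast
      have "\<forall>t\<in>T. \<exists>b. t = gr_act (Gal K) a b"
      proof
        fix t assume "t \<in> T"
        then have "t \<in> ?V0" using T(2) B0(1) by blast
        then show "\<exists>b. t = gr_act (Gal K) a b" by auto
      qed
      then obtain b where b: "\<And>t. t \<in> T \<Longrightarrow> t = gr_act (Gal K) a (b t)"
        by (rule bchoice[THEN exE]) blast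
      have "x = (\<Sum>t\<in>T. c t * gr_act (Gal K) a (b t))" using T(4) b by (auto intro!: sum.cong)
      also have "\<dots> = gr_act (Gal K) a (\<Sum>t\<in>T. c t * b t)" using gr_act_Klin2[OF T(3)] by simp
      finally show "x \<in> ?W" by blast
    qed
    show "?W \<subseteq> K_span K B0"
      using WV0 K_span_trans[OF subK finB0 V0B0] by blast
  qed
  have basis: "K_is_basis K ?W B0"
    unfolding K_is_basis_def using finB0 B0(2) spanB0 V0W B0(1) by blast
  then have ex: "\<exists>B. K_is_basis K ?W B" by blast
  then have sb: "K_is_basis K ?W (SOME B. K_is_basis K ?W B)" by (rule someI_ex)
  have "rk_K K (Gal K) a = card (SOME B. K_is_basis K ?W B)"
    unfolding rk_K_def K_dim_def using ex by simp
  also have "\<dots> = pv.dim (phi K ` ?V0)"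
    by (rule card_K_basis[OF gal finG sb finite_set V0W WV0])
  finally show ?thesis .
qed

lemma main_chain:
  shows "rk_K K (Gal K) a = L_quot_dim (grp_ring (Gal K)) (Ann (Gal K) a)
       \<and> L_quot_dim (grp_ring (Gal K)) (Ann (Gal K) a)
           = vec_space.rank (length gs) (moore_mat gs (map (gr_act (Gal K) a) \<beta>))
       \<and> vec_space.rank (length gs) (moore_mat gs (map (gr_act (Gal K) a) \<beta>))
           = vec_space.rank (length gs) (dickson_mat gs a)"
  using rk_eq Lq_eq moore_eq dickson_eq D0_eq by simp
end


theorem mainTheorem8:
  fixes K :: "'a::field set" and gs :: "('a \<Rightarrow> 'a) list"
    and a :: "('a \<Rightarrow> 'a) \<Rightarrow> 'a" and \<beta> :: "'a list"
  assumes gal: "finite_galois K"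
    and gs: "distinct gs" "set gs = Gal K"
    and a: "a \<in> grp_ring (Gal K)"
    and \<beta>: "distinct \<beta>" "K_is_basis K UNIV (set \<beta>)"
  shows "rk_K K (Gal K) a = L_quot_dim (grp_ring (Gal K)) (Ann (Gal K) a)
       \<and> L_quot_dim (grp_ring (Gal K)) (Ann (Gal K) a)
           = vec_space.rank (length gs) (moore_mat gs (map (gr_act (Gal K) a) \<beta>))
       \<and> vec_space.rank (length gs) (moore_mat gs (map (gr_act (Gal K) a) \<beta>))
           = vec_space.rank (length gs) (dickson_mat gs a)"
  by (rule main_chain[OF gal gs(2) a \<beta>(2)])



end
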